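(* Let $\Gamma$ be a totally ordered abelian group and let $D=\bigoplus_{s\in\Gamma_{\ge 0}}D_s$ be a domain graded by the nonnegative part of $\Gamma$ with $D_0=K$ a field, and assume $K$ is algebraically closed in $\operatorname{Frac} D$. Let $R=R(D)$ and let $\overline R$ be the integral closure of $R$ in its fraction field. Let $f,g\in D$ with $\deg(f)=\deg(g)=\delta\in\Gamma_{\ge0}$, and suppose $\frac fg\in\overline R$. Then $f_h=u\,g_h$ for some $u\in K$.
   Context: For an integral domain $D$ with fraction field $F$, the reciprocal complement $R(D)$ is the subring of $F$ generated by all $1/d$, $d\in D\setminus\{0\}$. For nonzero $f\in D$, $\deg(f)$ is the largest $s\in\Gamma_{\ge 0}$ such that the homogeneous component of $f$ in $D_s$ is nonzero, and $f_h$ denotes this homogeneous component of largest degree; $\deg(0)=-\infty$. *)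

theory Defs
  imports "HOL-Computational_Algebra.Polynomial" "HOL-Computational_Algebra.Fraction_Field"
begin

text \<open>A domain D (the whole type 'd) graded by the nonnegative part of a totally
ordered abelian group 'g: Dg s is the homogeneous piece D_s (only s \<ge> 0 matter).\<close>

definition is_decomp :: "('g::linordered_ab_group_add \<Rightarrow> 'd::idom set) \<Rightarrow> 'd \<Rightarrow> ('g \<Rightarrow> 'd) \<Rightarrow> bool" where
  "is_decomp Dg x c \<longleftrightarrow>
     (\<forall>s. 0 \<le> s \<longrightarrow> c s \<in> Dg s) \<and> (\<forall>s. s < 0 \<longrightarrow> c s = 0) \<and>
     finite {s. c s \<noteq> 0} \<and> x = sum c {s. c s \<noteq> 0}"

definition graded_domain :: "('g::linordered_ab_group_add \<Rightarrow> 'd::idom set) \<Rightarrow> bool" where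
  "graded_domain Dg \<longleftrightarrow>
     (\<forall>s. 0 \<le> s \<longrightarrow> 0 \<in> Dg s \<and> (\<forall>x\<in>Dg s. \<forall>y\<in>Dg s. x + y \<in> Dg s) \<and> (\<forall>x\<in>Dg s. - x \<in> Dg s)) \<and>
     (\<forall>s t x y. 0 \<le> s \<longrightarrow> 0 \<le> t \<longrightarrow> x \<in> Dg s \<longrightarrow> y \<in> Dg t \<longrightarrow> x * y \<in> Dg (s + t)) \<and>
     1 \<in> Dg 0 \<and>
     (\<forall>x. \<exists>!c. is_decomp Dg x c)"

definition degree0_field :: "('g::linordered_ab_group_add \<Rightarrow> 'd::idom set) \<Rightarrow> bool" where
  "degree0_field Dg \<longleftrightarrow> (\<forall>x\<in>Dg 0. x \<noteq> 0 \<longrightarrow> (\<exists>y\<in>Dg 0. x * y = 1))"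

definition hcomp :: "('g::linordered_ab_group_add \<Rightarrow> 'd::idom set) \<Rightarrow> 'd \<Rightarrow> 'g \<Rightarrow> 'd" where
  "hcomp Dg x s = (THE c. is_decomp Dg x c) s"

definition gdeg :: "('g::linordered_ab_group_add \<Rightarrow> 'd::idom set) \<Rightarrow> 'd \<Rightarrow> 'g" where
  "gdeg Dg x = Max {s. hcomp Dg x s \<noteq> 0}"

definition htop :: "('g::linordered_ab_group_add \<Rightarrow> 'd::idom set) \<Rightarrow> 'd \<Rightarrow> 'd" where
  "htop Dg x = hcomp Dg x (gdeg Dg x)"

abbreviation emb :: "'d::idom \<Rightarrow> 'd fract" where
  "emb d \<equiv> Fract d 1"

inductive_set recip_compl :: "'d::idom fract set" where
  inv: "d \<noteq> 0 \<Longrightarrow> inverse (emb d) \<in> recip_compl"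
| one: "1 \<in> recip_compl"
| add: "x \<in> recip_compl \<Longrightarrow> y \<in> recip_compl \<Longrightarrow> x + y \<in> recip_compl"
| neg: "x \<in> recip_compl \<Longrightarrow> - x \<in> recip_compl"
| mult: "x \<in> recip_compl \<Longrightarrow> y \<in> recip_compl \<Longrightarrow> x * y \<in> recip_compl"

definition integral_closure :: "'f::field set \<Rightarrow> 'f set" where
  "integral_closure R =
     {x. (\<exists>a\<in>R. \<exists>b\<in>R. b \<noteq> 0 \<and> x = a / b) \<and>
         (\<exists>p. lead_coeff p = 1 \<and> (\<forall>i. coeff p i \<in> R) \<and> poly p x = 0)}"

definition alg_closed_in :: "'f::field set \<Rightarrow> bool" where
  "alg_closed_in K \<longleftrightarrow>
     (\<forall>x. (\<exists>p. p \<noteq> 0 \<and> (\<forall>i. coeff p i \<in> K) \<and> poly p x = 0) \<longrightarrow> x \<in> K)"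

end

theory Submission imports Defs begin

locale gd =
  fixes Dg :: "'g::linordered_ab_group_add \<Rightarrow> 'd::idom set"
  assumes GD: "graded_domain Dg"
begin

lemma GD1: "\<forall>s. 0 \<le> s \<longrightarrow> 0 \<in> Dg s \<and> (\<forall>x\<in>Dg s. \<forall>y\<in>Dg s. x + y \<in> Dg s) \<and> (\<forall>x\<in>Dg s. - x \<in> Dg s)"
  using GD unfolding graded_domain_def by (elim conjE)
lemma GD2: "\<forall>s t x y. 0 \<le> s \<longrightarrow> 0 \<le> t \<longrightarrow> x \<in> Dg s \<longrightarrow> y \<in> Dg t \<longrightarrow> x * y \<in> Dg (s + t)"
  using GD unfolding graded_domain_def by (elim conjE)
lemma one_in: "1 \<in> Dg 0"
  using GD unfolding graded_domain_def by (elim conjE)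
lemma ex1: "\<exists>!c. is_decomp Dg x c"
  using GD unfolding graded_domain_def by (elim conjE) (erule spec)
lemma zero_in: "0 \<le> s \<Longrightarrow> 0 \<in> Dg s" using GD1 by simp
lemma add_in: "0 \<le> s \<Longrightarrow> x \<in> Dg s \<Longrightarrow> y \<in> Dg s \<Longrightarrow> x + y \<in> Dg s"
  using GD1 by simp
lemma neg_in: "0 \<le> s \<Longrightarrow> x \<in> Dg s \<Longrightarrow> - x \<in> Dg s"
  using GD1 by simp
lemma mult_in: "0 \<le> s \<Longrightarrow> 0 \<le> t \<Longrightarrow> x \<in> Dg s \<Longrightarrow> y \<in> Dg t \<Longrightarrow> x * y \<in> Dg (s + t)"
  using GD2 by simp

lemma sum_in: "finite I \<Longrightarrow> 0 \<le> s \<Longrightarrow> (\<forall>i\<in>I. e i \<in> Dg s) \<Longrightarrow> sum e I \<in> Dg s"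
proof (induction I rule: finite_induct)
  case empty then show ?case by (simp add: zero_in)
next
  case (insert i F) then show ?case by (simp add: add_in)
qed

lemma hcomp_THE: "hcomp Dg x = (THE c. is_decomp Dg x c)"
  by (rule ext) (simp add: hcomp_def)

lemma hcomp_eq: "is_decomp Dg x c \<Longrightarrow> hcomp Dg x = c"
  unfolding hcomp_THE by (rule the1_equality[OF ex1])

lemma hcomp_decomp: "is_decomp Dg x (hcomp Dg x)"
  unfolding hcomp_THE by (rule theI'[OF ex1])

lemma hcomp_intro:
  assumes "\<And>s. 0 \<le> s \<Longrightarrow> c s \<in> Dg s" "\<And>s. s < 0 \<Longrightarrow> c s = 0" "finite S"
    "{s. c s \<noteq> 0} \<subseteq> S" "x = sum c S"
  shows "hcomp Dg x = c"
proof (rule hcomp_eq)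
  have fin: "finite {s. c s \<noteq> 0}" using assms(3,4) by (rule finite_subset[rotated])
  have "sum c S = sum c {s. c s \<noteq> 0}"
    using assms(3,4) by (intro sum.mono_neutral_right) auto
  then have xs: "x = sum c {s. c s \<noteq> 0}" using assms(5) by (rule trans[rotated])
  show "is_decomp Dg x c" unfolding is_decomp_def
  proof (intro conjI allI impI)
    fix s :: 'g assume "0 \<le> s" then show "c s \<in> Dg s" by (rule assms(1))
  next
    fix s :: 'g assume "s < 0" then show "c s = 0" by (rule assms(2))
  qed (rule fin, rule xs)
qed

lemma hcomp_in: "0 \<le> s \<Longrightarrow> hcomp Dg x s \<in> Dg s"
  using hcomp_decomp[of x] unfolding is_decomp_def by blast
lemma hcomp_neg_idx: "s < 0 \<Longrightarrow> hcomp Dg x s = 0"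
  using hcomp_decomp[of x] unfolding is_decomp_def by blast
lemma supp_finite: "finite {s. hcomp Dg x s \<noteq> 0}"
  using hcomp_decomp[of x] unfolding is_decomp_def by blast
lemma sum_hcomp: "x = sum (hcomp Dg x) {s. hcomp Dg x s \<noteq> 0}"
  using hcomp_decomp[of x] unfolding is_decomp_def by blast

lemma hcomp_G:
  assumes "finite I" "\<And>i. i \<in> I \<Longrightarrow> 0 \<le> \<sigma> i" "\<And>i. i \<in> I \<Longrightarrow> e i \<in> Dg (\<sigma> i)"
  shows "hcomp Dg (sum e I) s = sum e {i\<in>I. \<sigma> i = s}"
proof -
  let ?c = "\<lambda>s. sum e {i\<in>I. \<sigma> i = s}"
  have c1: "?c s \<in> Dg s" if "0 \<le> s" for s
  proof (rule sum_in)
    show "finite {i\<in>I. \<sigma> i = s}" using assms(1) by (rule finite_subset[rotated]) blast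
    show "\<forall>i\<in>{i\<in>I. \<sigma> i = s}. e i \<in> Dg s"
    proof
      fix i assume "i \<in> {i\<in>I. \<sigma> i = s}"
      then have "i \<in> I" "\<sigma> i = s" by blast+
      then show "e i \<in> Dg s" using assms(3)[of i] by blast
    qed
  qed (rule that)
  have c2: "?c s = 0" if "s < 0" for s
  proof -
    have "{i\<in>I. \<sigma> i = s} = {}"
    proof (rule equals0I)
      fix i assume "i \<in> {i\<in>I. \<sigma> i = s}"
      then have "i \<in> I" "\<sigma> i = s" by blast+
      then show False using assms(2)[of i] that by (simp add: not_le[symmetric])
    qed
    then show ?thesis by (simp only: sum.empty)
  qed
  have c3: "{s. ?c s \<noteq> 0} \<subseteq> \<sigma> ` I"
  proof
    fix s assume "s \<in> {s. ?c s \<noteq> 0}"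
    then have "?c s \<noteq> 0" by (rule CollectD)
    then have "{i\<in>I. \<sigma> i = s} \<noteq> {}" by (metis sum.empty)
    then show "s \<in> \<sigma> ` I" by blast
  qed
  have c4: "sum e I = (\<Sum>s\<in>\<sigma> ` I. ?c s)"
    by (rule sum.image_gen[OF assms(1)])
  have "hcomp Dg (sum e I) = ?c"
    by (rule hcomp_intro[where S = "\<sigma> ` I", OF c1 c2 _ c3 c4]) (use assms(1) in simp_all)
  then show ?thesis by (rule fun_cong)
qed

lemma hcomp_add: "hcomp Dg (x + y) s = hcomp Dg x s + hcomp Dg y s"
proof -
  let ?A = "{s. hcomp Dg x s \<noteq> 0}" and ?B = "{s. hcomp Dg y s \<noteq> 0}"
  have "hcomp Dg (x + y) = (\<lambda>s. hcomp Dg x s + hcomp Dg y s)"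
  proof (rule hcomp_intro[where S = "?A \<union> ?B"])
    show "x + y = (\<Sum>s\<in>?A \<union> ?B. hcomp Dg x s + hcomp Dg y s)"
    proof -
      have "sum (hcomp Dg x) ?A = sum (hcomp Dg x) (?A \<union> ?B)"
        by (rule sum.mono_neutral_left) (use supp_finite in auto)
      moreover have "sum (hcomp Dg y) ?B = sum (hcomp Dg y) (?A \<union> ?B)"
        by (rule sum.mono_neutral_left) (use supp_finite in auto)
      ultimately have "sum (hcomp Dg x) ?A + sum (hcomp Dg y) ?B = (\<Sum>s\<in>?A \<union> ?B. hcomp Dg x s + hcomp Dg y s)"
        by (simp only: sum.distrib)
      moreover have "x + y = sum (hcomp Dg x) ?A + sum (hcomp Dg y) ?B"
        using sum_hcomp[of x] sum_hcomp[of y] by (rule arg_cong2[where f="(+)"])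
      ultimately show ?thesis by (rule trans[rotated])
    qed
  qed (auto intro: add_in hcomp_in simp: hcomp_neg_idx supp_finite)
  then show ?thesis by simp
qed

lemma hcomp_zero: "hcomp Dg 0 s = 0"
proof -
  have "hcomp Dg 0 = (\<lambda>s. 0)" by (rule hcomp_intro[where S = "{}"]) (auto intro: zero_in)
  then show ?thesis by simp
qed

lemma hcomp_minus: "hcomp Dg (- x) s = - hcomp Dg x s"
  using hcomp_add[of x "-x" s] by (simp add: hcomp_zero eq_neg_iff_add_eq_0 add.commute)

lemma hcomp_homog: assumes "0 \<le> t" "x \<in> Dg t"
  shows "hcomp Dg x s = (if s = t then x else 0)"
proof -
  have "hcomp Dg x = (\<lambda>s. if s = t then x else 0)"
    by (rule hcomp_intro[where S = "{t}"]) (use assms in \<open>auto intro: zero_in\<close>)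
  then show ?thesis by simp
qed

lemma supp_ne: assumes "x \<noteq> 0" shows "{s. hcomp Dg x s \<noteq> 0} \<noteq> {}"
proof
  assume "{s. hcomp Dg x s \<noteq> 0} = {}"
  then have "x = 0" using sum_hcomp[of x] by (metis sum.empty)
  then show False using assms by simp
qed

lemma top_nz: "x \<noteq> 0 \<Longrightarrow> hcomp Dg x (gdeg Dg x) \<noteq> 0"
  unfolding gdeg_def using Max_in[OF supp_finite supp_ne] by auto

lemma above_zero: "gdeg Dg x < s \<Longrightarrow> hcomp Dg x s = 0"
  unfolding gdeg_def using Max_ge[OF supp_finite, of s x] by force

lemma deg_eqI: "hcomp Dg x t \<noteq> 0 \<Longrightarrow> (\<And>s. t < s \<Longrightarrow> hcomp Dg x s = 0) \<Longrightarrow> gdeg Dg x = t"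
  unfolding gdeg_def by (rule Max_eqI[OF supp_finite]) (auto, meson not_le)

lemma deg_leI: "x \<noteq> 0 \<Longrightarrow> (\<And>s. t < s \<Longrightarrow> hcomp Dg x s = 0) \<Longrightarrow> gdeg Dg x \<le> t"
  using top_nz[of x] by (meson not_le)

lemma deg_nonneg: "x \<noteq> 0 \<Longrightarrow> 0 \<le> gdeg Dg x"
  using top_nz[of x] hcomp_neg_idx by (meson not_le)

lemma le_deg: "hcomp Dg x s \<noteq> 0 \<Longrightarrow> s \<le> gdeg Dg x"
  using above_zero by (meson not_le)

lemma hcomp_mult:
  assumes "x \<noteq> 0" "y \<noteq> 0"
  shows "gdeg Dg (x * y) = gdeg Dg x + gdeg Dg y \<and> htop Dg (x * y) = htop Dg x * htop Dg y"
proof -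
  let ?A = "{s. hcomp Dg x s \<noteq> 0}" and ?B = "{s. hcomp Dg y s \<noteq> 0}"
  let ?e = "\<lambda>p. hcomp Dg x (fst p) * hcomp Dg y (snd p)"
  let ?\<sigma> = "\<lambda>p::'g\<times>'g. fst p + snd p"
  let ?dx = "gdeg Dg x" and ?dy = "gdeg Dg y"
  have "x * y = sum (hcomp Dg x) ?A * sum (hcomp Dg y) ?B"
    using sum_hcomp[of x] sum_hcomp[of y] by (rule arg_cong2[where f="(*)"])
  also have "\<dots> = (\<Sum>t\<in>?A. \<Sum>u\<in>?B. hcomp Dg x t * hcomp Dg y u)" by (rule sum_product)
  also have "\<dots> = sum ?e (?A \<times> ?B)" by (simp only: sum.cartesian_product split_def)
  finally have xy: "x * y = sum ?e (?A \<times> ?B)" .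
  have nn: "\<And>t. hcomp Dg x t \<noteq> 0 \<Longrightarrow> 0 \<le> t" "\<And>t. hcomp Dg y t \<noteq> 0 \<Longrightarrow> 0 \<le> t"
    using hcomp_neg_idx by (meson not_le)+
  have G: "hcomp Dg (x * y) s = sum ?e {p\<in>?A \<times> ?B. ?\<sigma> p = s}" for s
    unfolding xy
  proof (rule hcomp_G)
    show "finite (?A \<times> ?B)" using supp_finite by simp
    fix i assume i: "i \<in> ?A \<times> ?B"
    then have i1: "hcomp Dg x (fst i) \<noteq> 0" and i2: "hcomp Dg y (snd i) \<noteq> 0" by auto
    have n1: "0 \<le> fst i" by (rule nn(1)[OF i1])
    have n2: "0 \<le> snd i" by (rule nn(2)[OF i2])
    show "0 \<le> ?\<sigma> i" using n1 n2 by (rule add_nonneg_nonneg)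
    show "?e i \<in> Dg (?\<sigma> i)" by (rule mult_in[OF n1 n2 hcomp_in[OF n1] hcomp_in[OF n2]])
  qed
  have above: "hcomp Dg (x * y) s = 0" if "?dx + ?dy < s" for s
  proof -
    have E: "{p\<in>?A \<times> ?B. ?\<sigma> p = s} = {}"
    proof (rule ccontr)
      assume "{p\<in>?A \<times> ?B. ?\<sigma> p = s} \<noteq> {}"
      then obtain t u where "hcomp Dg x t \<noteq> 0" "hcomp Dg y u \<noteq> 0" "t + u = s" by auto
      then have "t + u \<le> ?dx + ?dy" using le_deg by (meson add_mono)
      then show False using that \<open>t + u = s\<close> by simp
    qed
    have "hcomp Dg (x * y) s = sum ?e {p\<in>?A \<times> ?B. ?\<sigma> p = s}" by (rule G)
    also have "\<dots> = 0" unfolding E by (rule sum.empty)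
    finally show ?thesis .
  qed
  have at: "hcomp Dg (x * y) (?dx + ?dy) = htop Dg x * htop Dg y"
  proof -
    have "{p\<in>?A \<times> ?B. ?\<sigma> p = ?dx + ?dy} = {(?dx, ?dy)}"
    proof (rule set_eqI)
      fix p :: "'g \<times> 'g"
      obtain t u where p: "p = (t, u)" by (cases p)
      show "p \<in> {p\<in>?A \<times> ?B. ?\<sigma> p = ?dx + ?dy} \<longleftrightarrow> p \<in> {(?dx, ?dy)}"
      proof
        assume "p \<in> {p\<in>?A \<times> ?B. ?\<sigma> p = ?dx + ?dy}"
        then have h: "hcomp Dg x t \<noteq> 0" "hcomp Dg y u \<noteq> 0" "t + u = ?dx + ?dy" using p by auto
        have t: "t \<le> ?dx" and u: "u \<le> ?dy" using h le_deg by auto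
        have t': "t = ?dx"
        proof (rule ccontr)
          assume "t \<noteq> ?dx" then have "t < ?dx" using t by simp
          then have "t + u < ?dx + ?dy" using u by (rule add_less_le_mono)
          then show False using h by simp
        qed
        have u': "u = ?dy"
        proof (rule ccontr)
          assume "u \<noteq> ?dy" then have "u < ?dy" using u by simp
          then have "t + u < ?dx + ?dy" using t by (simp add: add_le_less_mono)
          then show False using h by simp
        qed
        show "p \<in> {(?dx, ?dy)}" using p t' u' by simp
      next
        assume "p \<in> {(?dx, ?dy)}"
        then have "p = (?dx, ?dy)" by simp
        then show "p \<in> {p\<in>?A \<times> ?B. ?\<sigma> p = ?dx + ?dy}" using top_nz assms by auto
      qed
    qed
    then show ?thesis unfolding htop_def G by simp
  qed
  have nz: "htop Dg x * htop Dg y \<noteq> 0" using top_nz assms unfolding htop_def by simp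
  have d: "gdeg Dg (x * y) = ?dx + ?dy" using at nz above by (intro deg_eqI) auto
  show ?thesis using d at unfolding htop_def by simp
qed


lemma deg_minus: "gdeg Dg (- x) = gdeg Dg x" and top_minus: "htop Dg (- x) = - htop Dg x"
  unfolding gdeg_def htop_def by (simp_all add: hcomp_minus)

lemma homog_deg: assumes "0 \<le> t" "x \<in> Dg t" "x \<noteq> 0"
  shows "gdeg Dg x = t" "htop Dg x = x"
proof -
  show "gdeg Dg x = t" using assms by (intro deg_eqI) (auto simp: hcomp_homog)
  then show "htop Dg x = x" unfolding htop_def using assms by (simp add: hcomp_homog)
qed

lemma add_cases:
  assumes "x \<noteq> 0" "y \<noteq> 0" "gdeg Dg x \<le> e" "gdeg Dg y \<le> e"
  shows "x + y = 0 \<or> (gdeg Dg (x + y) \<le> e \<and>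
     (gdeg Dg (x + y) = e \<longleftrightarrow> hcomp Dg x e + hcomp Dg y e \<noteq> 0) \<and>
     (gdeg Dg (x + y) = e \<longrightarrow> htop Dg (x + y) = hcomp Dg x e + hcomp Dg y e))"
proof (cases "x + y = 0")
  case False
  have ab: "hcomp Dg (x + y) s = 0" if "e < s" for s
    using that assms above_zero hcomp_add by (metis add.right_neutral order.strict_trans1)
  have le: "gdeg Dg (x + y) \<le> e" using False ab by (rule deg_leI)
  show ?thesis
  proof (intro disjI2 conjI)
    show "gdeg Dg (x + y) \<le> e" by (rule le)
    show "gdeg Dg (x + y) = e \<longleftrightarrow> hcomp Dg x e + hcomp Dg y e \<noteq> 0"
      using top_nz[OF False] deg_eqI[of "x+y" e] ab by (auto simp: hcomp_add)
    show "gdeg Dg (x + y) = e \<longrightarrow> htop Dg (x + y) = hcomp Dg x e + hcomp Dg y e"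
      by (simp add: htop_def hcomp_add)
  qed
qed simp

definition res :: "'d \<Rightarrow> 'd \<Rightarrow> 'd fract" where
  "res a b = (if a \<noteq> 0 \<and> gdeg Dg a = gdeg Dg b then Fract (htop Dg a) (htop Dg b) else 0)"
definition okv :: "'d \<Rightarrow> 'd \<Rightarrow> bool" where
  "okv a b \<longleftrightarrow> (a = 0 \<or> gdeg Dg a \<le> gdeg Dg b)"
definition inV :: "'d fract \<Rightarrow> bool" where
  "inV q \<longleftrightarrow> (\<exists>a b. b \<noteq> 0 \<and> q = Fract a b \<and> okv a b)"
definition phi :: "'d fract \<Rightarrow> 'd fract" where
  "phi q = (let p = SOME p. snd p \<noteq> 0 \<and> q = Fract (fst p) (snd p) in res (fst p) (snd p))"

lemma welldef:
  assumes "b \<noteq> 0" "d \<noteq> 0" "a * d = c * b"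
  shows "okv a b = okv c d \<and> res a b = res c d"
proof (cases "a = 0")
  case True
  then have "c = 0" using assms by simp
  then show ?thesis using True by (simp add: okv_def res_def)
next
  case False
  then have c: "c \<noteq> 0" using assms by auto
  have "gdeg Dg (a * d) = gdeg Dg (c * b)" "htop Dg (a * d) = htop Dg (c * b)" using assms by simp_all
  then have e: "gdeg Dg a + gdeg Dg d = gdeg Dg c + gdeg Dg b"
    and t: "htop Dg a * htop Dg d = htop Dg c * htop Dg b"
    using hcomp_mult[OF False assms(2)] hcomp_mult[OF c assms(1)] by auto
  have tb: "htop Dg b \<noteq> 0" "htop Dg d \<noteq> 0" using top_nz assms unfolding htop_def by auto
  have i1: "gdeg Dg a \<le> gdeg Dg b \<longleftrightarrow> gdeg Dg c \<le> gdeg Dg d"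
    by (metis add.commute add_le_cancel_left e)
  have i2: "gdeg Dg a = gdeg Dg b \<longleftrightarrow> gdeg Dg c = gdeg Dg d"
    by (metis add.commute add_left_cancel e)
  have "Fract (htop Dg a) (htop Dg b) = Fract (htop Dg c) (htop Dg d)"
    using tb t by (simp add: eq_fract)
  then show ?thesis using False c i1 i2 by (auto simp: okv_def res_def)
qed

lemma phi_Fract: assumes "b \<noteq> 0" shows "phi (Fract a b) = res a b"
proof -
  let ?P = "\<lambda>p. snd p \<noteq> 0 \<and> Fract a b = Fract (fst p) (snd p)"
  define p0 where "p0 = (SOME p. ?P p)"
  have "?P (a, b)" using assms by simp
  then have P: "?P p0" unfolding p0_def by (rule someI)
  then have "a * snd p0 = fst p0 * b" using eq_fract(1)[OF assms, of "snd p0" a "fst p0"] by simp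
  then have "res a b = res (fst p0) (snd p0)"
    using welldef assms P by blast
  then show ?thesis unfolding phi_def Let_def p0_def by simp
qed

lemma inV_Fract: assumes "b \<noteq> 0" shows "inV (Fract a b) \<longleftrightarrow> okv a b"
proof
  assume "inV (Fract a b)"
  then obtain c d where "d \<noteq> 0" "Fract a b = Fract c d" "okv c d" unfolding inV_def by blast
  then show "okv a b" using welldef[of b d a c] assms by (simp add: eq_fract)
qed (use assms inV_def in blast)

lemma phi_zero: "phi 0 = 0"
proof -
  have "phi (Fract 0 1) = 0" by (simp add: phi_Fract res_def)
  then show ?thesis by (simp add: Zero_fract_def)
qed

lemma inV_zero: "inV 0"
  unfolding Zero_fract_def by (simp add: inV_Fract okv_def)

lemma Fract_cr: "c \<noteq> 0 \<Longrightarrow> Fract (a * c) (b * c) = Fract a b"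
  by (metis mult.commute mult_fract_cancel)
lemma Fract_cl: "c \<noteq> 0 \<Longrightarrow> Fract (a * c) (c * b) = Fract a b"
  by (metis mult.commute mult_fract_cancel)

lemma Fract0: "Fract 0 b = 0"
  by (simp add: Zero_fract_def eq_fract(3))
lemma phi_one: "phi 1 = 1" and inV_one: "inV 1"
  using homog_deg[OF order.refl one_in] 
  unfolding One_fract_def by (simp_all add: phi_Fract res_def inV_Fract okv_def)

lemma inV_phi_minus: assumes "inV x" shows "inV (- x) \<and> phi (- x) = - phi x"
proof -
  obtain a b where ab: "b \<noteq> 0" "x = Fract a b" "okv a b" using assms unfolding inV_def by blast
  have m: "- x = Fract (- a) b" using ab by simp
  have "okv (- a) b" using ab by (simp add: okv_def deg_minus)
  moreover have "res (- a) b = - res a b" by (simp add: res_def deg_minus top_minus)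
  ultimately show ?thesis using ab m by (simp add: inV_Fract phi_Fract)
qed

lemma inV_phi_mult: assumes "inV x" "inV y" shows "inV (x * y) \<and> phi (x * y) = phi x * phi y"
proof -
  obtain a b where ab: "b \<noteq> 0" "x = Fract a b" "okv a b" using assms unfolding inV_def by blast
  obtain c d where cd: "d \<noteq> 0" "y = Fract c d" "okv c d" using assms unfolding inV_def by blast
  have bd: "b * d \<noteq> 0" using ab cd by simp
  show ?thesis
  proof (cases "a = 0 \<or> c = 0")
    case True
    then have "x = 0 \<or> y = 0" using ab cd by (auto simp: Fract0)
    then show ?thesis using phi_zero inV_zero by auto
  next
    case False
    then have a: "a \<noteq> 0" and c: "c \<noteq> 0" by auto
    have m1: "gdeg Dg (a * c) = gdeg Dg a + gdeg Dg c" "htop Dg (a * c) = htop Dg a * htop Dg c"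
      using hcomp_mult[OF a c] by auto
    have m2: "gdeg Dg (b * d) = gdeg Dg b + gdeg Dg d" "htop Dg (b * d) = htop Dg b * htop Dg d"
      using hcomp_mult[OF ab(1) cd(1)] by auto
    have l1: "gdeg Dg a \<le> gdeg Dg b" "gdeg Dg c \<le> gdeg Dg d" using ab cd a c by (auto simp: okv_def)
    have ok: "okv (a * c) (b * d)" using m1 m2 l1 by (simp add: okv_def add_mono)
    have eq: "gdeg Dg a + gdeg Dg c = gdeg Dg b + gdeg Dg d \<longleftrightarrow>
        gdeg Dg a = gdeg Dg b \<and> gdeg Dg c = gdeg Dg d"
    proof
      assume h: "gdeg Dg a + gdeg Dg c = gdeg Dg b + gdeg Dg d"
      show "gdeg Dg a = gdeg Dg b \<and> gdeg Dg c = gdeg Dg d"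
      proof (rule ccontr)
        assume "\<not> ?thesis"
        then have "gdeg Dg a < gdeg Dg b \<or> gdeg Dg c < gdeg Dg d" using l1 by auto
        then have "gdeg Dg a + gdeg Dg c < gdeg Dg b + gdeg Dg d"
          using l1 add_less_le_mono add_le_less_mono by blast
        then show False using h by simp
      qed
    qed simp
    show ?thesis using ab cd bd a c ok m1 m2 eq
      by (auto simp: inV_Fract phi_Fract res_def)
  qed
qed

lemma inV_phi_add: assumes "inV x" "inV y" shows "inV (x + y) \<and> phi (x + y) = phi x + phi y"
proof -
  obtain a b where ab: "b \<noteq> 0" "x = Fract a b" "okv a b" using assms unfolding inV_def by blast
  obtain c d where cd: "d \<noteq> 0" "y = Fract c d" "okv c d" using assms unfolding inV_def by blast
  have bd: "b * d \<noteq> 0" using ab cd by simp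
  show ?thesis
  proof (cases "a = 0 \<or> c = 0")
    case True
    then have "x = 0 \<or> y = 0" using ab cd by (auto simp: Fract0)
    then show ?thesis using phi_zero assms by auto
  next
    case False
    then have a: "a \<noteq> 0" and c: "c \<noteq> 0" by auto
    let ?e = "gdeg Dg b + gdeg Dg d"
    have m1: "gdeg Dg (a * d) = gdeg Dg a + gdeg Dg d" "htop Dg (a * d) = htop Dg a * htop Dg d"
      using hcomp_mult[OF a cd(1)] by auto
    have m2: "gdeg Dg (c * b) = gdeg Dg c + gdeg Dg b" "htop Dg (c * b) = htop Dg c * htop Dg b"
      using hcomp_mult[OF c ab(1)] by auto
    have m3: "gdeg Dg (b * d) = ?e" "htop Dg (b * d) = htop Dg b * htop Dg d"
      using hcomp_mult[OF ab(1) cd(1)] by auto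
    have l1: "gdeg Dg a \<le> gdeg Dg b" "gdeg Dg c \<le> gdeg Dg d" using ab cd a c by (auto simp: okv_def)
    have ad: "a * d \<noteq> 0" "c * b \<noteq> 0" using a c ab cd by auto
    have d1: "gdeg Dg (a * d) \<le> ?e" "gdeg Dg (c * b) \<le> ?e" using m1 m2 l1
      by (simp_all add: add.commute add_right_mono)
    have h1: "hcomp Dg (a * d) ?e = (if gdeg Dg a = gdeg Dg b then htop Dg a * htop Dg d else 0)"
      using m1 l1 above_zero[of "a * d" ?e] unfolding htop_def by auto
    have h2: "hcomp Dg (c * b) ?e = (if gdeg Dg c = gdeg Dg d then htop Dg c * htop Dg b else 0)"
      using m2 l1 above_zero[of "c * b" ?e] unfolding htop_def by (auto simp: add.commute)
    have tb: "htop Dg b \<noteq> 0" "htop Dg d \<noteq> 0" using top_nz ab cd unfolding htop_def by auto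
    have sum: "x + y = Fract (a * d + c * b) (b * d)" using ab cd by simp
    have rhs: "phi x + phi y = Fract (hcomp Dg (a * d) ?e + hcomp Dg (c * b) ?e) (htop Dg b * htop Dg d)"
      using ab cd a c tb h1 h2 by (auto simp: phi_Fract res_def Fract0 Fract_cr Fract_cl)
    from add_cases[OF ad d1] show ?thesis
    proof
      assume z: "a * d + c * b = 0"
      then have "hcomp Dg (a * d) ?e + hcomp Dg (c * b) ?e = 0"
        by (metis hcomp_add hcomp_zero)
      then show ?thesis using z sum rhs bd by (simp add: inV_Fract okv_def phi_Fract res_def Fract0 inV_zero phi_zero)
    next
      assume h: "gdeg Dg (a * d + c * b) \<le> ?e \<and>
        (gdeg Dg (a * d + c * b) = ?e \<longleftrightarrow> hcomp Dg (a * d) ?e + hcomp Dg (c * b) ?e \<noteq> 0) \<and>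
        (gdeg Dg (a * d + c * b) = ?e \<longrightarrow> htop Dg (a * d + c * b) = hcomp Dg (a * d) ?e + hcomp Dg (c * b) ?e)"
      have "inV (x + y)" using h sum bd m3 by (simp add: inV_Fract okv_def)
      moreover have "phi (x + y) = phi x + phi y"
        using h sum bd m3 rhs by (auto simp: phi_Fract res_def Fract0 htop_def hcomp_zero)
      ultimately show ?thesis by simp
    qed
  qed
qed

lemma recip_in:
  assumes F: "degree0_field Dg" and x: "x \<in> recip_compl"
  shows "inV x \<and> phi x \<in> emb ` Dg 0"
  using x
proof induction
  case (inv d)
  have dd: "0 \<le> gdeg Dg d" using deg_nonneg inv by simp
  have o1: "gdeg Dg 1 = 0" "htop Dg 1 = 1" using homog_deg[OF order.refl one_in] by simp_all
  have iv: "inverse (emb d) = Fract 1 d" by simp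
  show ?case
  proof (cases "gdeg Dg d = 0")
    case True
    have "htop Dg d \<in> Dg 0" "htop Dg d \<noteq> 0" using hcomp_in[of "gdeg Dg d" d] top_nz[OF inv] True
      unfolding htop_def by auto
    then obtain y where y: "y \<in> Dg 0" "htop Dg d * y = 1" using F unfolding degree0_field_def by blast
    then have "Fract 1 (htop Dg d) = Fract y 1" using \<open>htop Dg d \<noteq> 0\<close> by (simp add: eq_fract mult.commute)
    then show ?thesis using inv o1 True y dd by (auto simp: iv inV_Fract okv_def phi_Fract res_def)
  next
    case False
    have "phi (inverse (emb d)) = emb 0" using inv o1 False
      by (simp add: iv phi_Fract res_def Zero_fract_def[symmetric])
    then show ?thesis using inv o1 dd zero_in[of 0] by (auto simp: iv inV_Fract okv_def)
  qed
next
  case one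
  have "(1::'d fract) = emb 1" by (simp add: One_fract_def)
  then show ?case using inV_one phi_one one_in by auto
next
  case (add x y)
  then obtain u v where "u \<in> Dg 0" "v \<in> Dg 0" "phi x = emb u" "phi y = emb v" by auto
  then show ?case using inV_phi_add[of x y] add add_in[of 0 u v] by auto
next
  case (neg x)
  then obtain u where "u \<in> Dg 0" "phi x = emb u" by auto
  moreover have "- u \<in> Dg 0" using neg_in[of 0 u] \<open>u \<in> Dg 0\<close> by simp
  ultimately show ?case using inV_phi_minus[of x] neg by (auto intro!: image_eqI[of _ _ "- u"])
next
  case (mult x y)
  then obtain u v where "u \<in> Dg 0" "v \<in> Dg 0" "phi x = emb u" "phi y = emb v" by auto
  then show ?case using inV_phi_mult[of x y] mult mult_in[of 0 0 u v] by auto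
qed

lemma poly_phi:
  assumes "\<And>i. inV (coeff p i)" "inV x"
  shows "inV (poly p x) \<and> phi (poly p x) = poly (map_poly phi p) (phi x)"
  using assms(1)
proof (induction p)
  case 0
  then show ?case using inV_one phi_zero inV_phi_minus[OF inV_one]
    by simp
next
  case (pCons a p)
  have a: "inV a" using pCons.prems[of 0] by simp
  have p: "\<And>i. inV (coeff p i)" using pCons.prems[of "Suc _"] by simp
  have ih: "inV (poly p x) \<and> phi (poly p x) = poly (map_poly phi p) (phi x)" by (rule pCons.IH[OF p])
  have m: "inV (x * poly p x) \<and> phi (x * poly p x) = phi x * phi (poly p x)"
    using inV_phi_mult assms(2) ih by blast
  show ?case using inV_phi_add[OF a m[THEN conjunct1]] m ih
    by (simp add: map_poly_pCons phi_zero)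
qed

end

theorem mainTheorem9:
  fixes Dg :: "'g::linordered_ab_group_add \<Rightarrow> 'd::idom set"
    and f g :: 'd and \<delta> :: 'g
  assumes "graded_domain Dg"
    and "degree0_field Dg"
    and "alg_closed_in (emb ` Dg 0)"
    and "f \<noteq> 0" and "g \<noteq> 0"
    and "0 \<le> \<delta>" and "gdeg Dg f = \<delta>" and "gdeg Dg g = \<delta>"
    and "emb f / emb g \<in> integral_closure recip_compl"
  shows "\<exists>u\<in>Dg 0. htop Dg f = u * htop Dg g"
proof -
  interpret gd Dg by unfold_locales (rule assms(1))
  have q: "emb f / emb g = Fract f g" by simp
  obtain p where p: "lead_coeff p = 1" "\<And>i. coeff p i \<in> recip_compl" "poly p (Fract f g) = 0"
    using assms(9) unfolding integral_closure_def q by blast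
  have R: "\<And>i. inV (coeff p i) \<and> phi (coeff p i) \<in> emb ` Dg 0"
    using recip_in[OF assms(2) p(2)] by blast
  have xV: "inV (Fract f g)" using assms by (simp add: inV_Fract okv_def)
  have px: "phi (Fract f g) = Fract (htop Dg f) (htop Dg g)"
    using assms by (simp add: phi_Fract res_def)
  have ev: "poly (map_poly phi p) (phi (Fract f g)) = 0"
    using poly_phi[OF _ xV] R p(3) phi_zero by metis
  have lc: "lead_coeff (map_poly phi p) = 1"
    using lead_coeff_map_poly_nz[of phi p] p(1) phi_one phi_zero by simp
  have nz: "map_poly phi p \<noteq> 0" using lc by auto
  have cf: "\<forall>i. coeff (map_poly phi p) i \<in> emb ` Dg 0"
    using R by (simp add: coeff_map_poly phi_zero)
  have "Fract (htop Dg f) (htop Dg g) \<in> emb ` Dg 0"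
    using assms(3) nz cf ev px unfolding alg_closed_in_def by metis
  then obtain u where u: "u \<in> Dg 0" "Fract (htop Dg f) (htop Dg g) = Fract u 1" by auto
  have "htop Dg g \<noteq> 0" using top_nz assms(5) unfolding htop_def by simp
  then have "htop Dg f = u * htop Dg g" using u(2) by (simp add: eq_fract)
  then show ?thesis using u(1) by blast
qed

end
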